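(* Let $\alpha=[0;a_1,a_2,\ldots]\in\mathbf{Bad}$ and let $(p_n/q_n)_{n\ge1}$ be the sequence of its convergents. Assume that there exist a positive rational number $x$ and a sequence of finite words $(U_k)_{k\ge1}$ over the positive integers such that, for every $k\ge1$, the sequence of partial quotients $a_1a_2\ldots$ of $\alpha$ begins with the word $U_kU_k^x$, and $|U_{k+1}|>|U_k|$. Set $M=\limsup_{\ell\to+\infty}q_\ell^{1/\ell}$ and $m=\liminf_{\ell\to+\infty}q_\ell^{1/\ell}$. If $$x\ge1\quad\text{or}\quad x>\frac12\cdot\frac{\log M}{\log m},$$ then for every real number $\beta$ equal to $\alpha$ up to a rational homography one has $\inf_{q\ge1}q\cdot\Vert q\alpha\Vert\cdot\Vert q\beta\Vert=0$.
   Context: For a real number $y$, $\Vert y\Vert$ denotes the distance from $y$ to the nearest integer. $\mathbf{Bad}=\{\alpha\in\mathbb{R} : \inf_{q\ge1} q\Vert q\alpha\Vert>0\}$ (equivalently, real numbers with bounded partial quotients). A finite word $W=w_1\ldots w_r$ over the positive integers is identified with the sequence of partial quotients $w_1,\ldots,w_r$; $|W|$ denotes its length. For a positive rational $x$, $W^x$ denotes the word $W^{[x]}W'$, where $W^{[x]}$ is the concatenation of $[x]$ copies of $W$ and $W'$ is the prefix of $W$ of length $\lceil (x-[x])|W|\rceil$. A real number $\beta$ is equal to $\alpha$ up to a rational homography if $\beta=(a\alpha+b)/(c\alpha+d)$ for some integers $a,b,c,d$ with $ad-bc\neq0$. *)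

theory Defs
  imports "HOL-Analysis.Analysis"
begin

definition nint_dist :: "real \<Rightarrow> real" where
  "nint_dist y = \<bar>y - of_int (round y)\<bar>"

definition Bad :: "real set" where
  "Bad = {\<alpha>. (INF q\<in>{1::nat..}. real q * nint_dist (real q * \<alpha>)) > 0}"

text \<open>Numerators and denominators of the convergents of [0; a 1, a 2, ...]
  (the partial quotients are a 1, a 2, ...; a 0 is unused, a_0 = 0).\<close>
fun cf_p :: "(nat \<Rightarrow> nat) \<Rightarrow> nat \<Rightarrow> nat" where
  "cf_p a 0 = 0"
| "cf_p a (Suc 0) = 1"
| "cf_p a (Suc (Suc n)) = a (Suc (Suc n)) * cf_p a (Suc n) + cf_p a n"

fun cf_q :: "(nat \<Rightarrow> nat) \<Rightarrow> nat \<Rightarrow> nat" where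
  "cf_q a 0 = 1"
| "cf_q a (Suc 0) = a (Suc 0)"
| "cf_q a (Suc (Suc n)) = a (Suc (Suc n)) * cf_q a (Suc n) + cf_q a n"

definition word_pow :: "nat list \<Rightarrow> rat \<Rightarrow> nat list" where
  "word_pow W x = concat (replicate (nat \<lfloor>x\<rfloor>) W) @
     take (nat \<lceil>(x - of_int \<lfloor>x\<rfloor>) * of_nat (length W)\<rceil>) W"

definition cf_begins_with :: "(nat \<Rightarrow> nat) \<Rightarrow> nat list \<Rightarrow> bool" where
  "cf_begins_with a W \<longleftrightarrow> (\<forall>i<length W. a (Suc i) = W ! i)"

end

theory Submission
  imports Defs
begin


lemma q_pos: assumes pos: "\<forall>n\<ge>1. a n \<ge> (1::nat)" shows "cf_q a n \<ge> 1"
proof (induction n rule: less_induct)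
  case (less n)
  show ?case
  proof (cases n)
    case 0 then show ?thesis by simp
  next
    case (Suc k)
    show ?thesis
    proof (cases k)
      case 0 then show ?thesis using pos Suc by simp
    next
      case (Suc j)
      have "cf_q a j \<ge> 1" using less \<open>n = Suc k\<close> Suc by simp
      then show ?thesis using \<open>n = Suc k\<close> Suc by simp
    qed
  qed
qed

lemma le_mult_pos: "(1::nat) \<le> b \<Longrightarrow> c \<le> b * c" by simp

lemma q_mono_Suc: assumes pos: "\<forall>n\<ge>1. a n \<ge> (1::nat)" shows "cf_q a n \<le> cf_q a (Suc n)"
proof (cases n)
  case 0 then show ?thesis using pos by simp
next
  case (Suc k)
  have "a (Suc (Suc k)) \<ge> 1" using pos by simp
  then have "cf_q a (Suc k) \<le> a (Suc (Suc k)) * cf_q a (Suc k)" by (rule le_mult_pos)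
  then show ?thesis using Suc by (simp add: trans_le_add1)
qed

lemma q_mono: assumes pos: "\<forall>n\<ge>1. a n \<ge> (1::nat)" and "i \<le> j" shows "cf_q a i \<le> cf_q a j"
  using assms(2)
proof (induction j)
  case 0 then show ?case by simp
next
  case (Suc j) then show ?case using q_mono_Suc[OF pos, of j] by (cases "i = Suc j") auto
qed

lemma q_SS: assumes pos: "\<forall>n\<ge>1. a n \<ge> (1::nat)" shows "2 * cf_q a n \<le> cf_q a (Suc (Suc n))"
proof -
  have "a (Suc (Suc n)) \<ge> 1" using pos by simp
  then have "cf_q a (Suc n) \<le> a (Suc (Suc n)) * cf_q a (Suc n)" by (rule le_mult_pos)
  moreover have "cf_q a n \<le> cf_q a (Suc n)" using q_mono_Suc[OF pos, of n] .
  ultimately show ?thesis by (simp only: cf_q.simps)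
qed

lemma q_exp: assumes pos: "\<forall>n\<ge>1. a n \<ge> (1::nat)" shows "2 ^ (n div 2) \<le> cf_q a n"
proof (induction n rule: less_induct)
  case (less n)
  show ?case
  proof (cases "n < 2")
    case True then show ?thesis using q_pos[OF pos, of n] by auto
  next
    case False
    then obtain k where k: "n = Suc (Suc k)" by (metis add_2_eq_Suc le_add_diff_inverse not_less)
    have "2 ^ (k div 2) \<le> cf_q a k" using less k by simp
    moreover have "n div 2 = Suc (k div 2)" using k by simp
    ultimately show ?thesis using q_SS[OF pos, of k] k by simp
  qed
qed

lemma p_le_q: assumes pos: "\<forall>n\<ge>1. a n \<ge> (1::nat)" shows "cf_p a n \<le> cf_q a n"
proof (induction n rule: less_induct)
  case (less n)
  show ?case
  proof (cases n)
    case 0 then show ?thesis by simp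
  next
    case (Suc k) then show ?thesis using pos less
      by (cases k) (auto intro!: add_mono mult_left_mono)
  qed
qed

lemma cf_det: "int (cf_p a (Suc n)) * int (cf_q a n) - int (cf_p a n) * int (cf_q a (Suc n)) = (-1) ^ n"
proof (induction n)
  case 0 then show ?case by simp
next
  case (Suc n)
  then show ?case by (simp add: algebra_simps)
qed

lemma alt_sum_bound:
  fixes f :: "nat \<Rightarrow> real"
  assumes "\<And>i. f (Suc i) \<le> f i" "\<And>i. f i \<ge> 0"
  shows "0 \<le> (\<Sum>i<N. (-1)^i * f i) \<and> (\<Sum>i<N. (-1)^i * f i) \<le> f 0"
  using assms
proof (induction N arbitrary: f)
  case 0 then show ?case by simp
next
  case (Suc N)
  have IH: "0 \<le> (\<Sum>i<N. (-1)^i * f (Suc i)) \<and> (\<Sum>i<N. (-1)^i * f (Suc i)) \<le> f (Suc 0)"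
    using Suc.IH[of "\<lambda>i. f (Suc i)"] Suc.prems by auto
  have eq: "(\<Sum>i<Suc N. (-1)^i * f i) = f 0 - (\<Sum>i<N. (-1)^i * f (Suc i))"
    by (subst sum.lessThan_Suc_shift) (simp add: sum_negf[symmetric])
  show ?case using IH Suc.prems(1)[of 0] Suc.prems(2)[of 0] unfolding eq by linarith
qed

lemma conv_step:
  assumes pos: "\<forall>n\<ge>1. a n \<ge> (1::nat)"
  shows "real (cf_p a (Suc i)) / real (cf_q a (Suc i)) - real (cf_p a i) / real (cf_q a i)
     = (-1)^i * (1 / (real (cf_q a i) * real (cf_q a (Suc i))))"
proof -
  have q1: "real (cf_q a i) > 0" "real (cf_q a (Suc i)) > 0" using q_pos[OF pos] by (auto simp: Suc_le_eq)
  have d: "real (cf_p a (Suc i)) * real (cf_q a i) - real (cf_p a i) * real (cf_q a (Suc i)) = (-1)^i"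
    using arg_cong[OF cf_det[of a i], of real_of_int] by simp
  show ?thesis using q1 d by (simp add: field_simps)
qed

lemma conv_tel:
  assumes pos: "\<forall>n\<ge>1. a n \<ge> (1::nat)"
  shows "real (cf_p a (n+N)) / real (cf_q a (n+N)) - real (cf_p a n) / real (cf_q a n)
     = (-1)^n * (\<Sum>i<N. (-1)^i * (1 / (real (cf_q a (n+i)) * real (cf_q a (Suc (n+i))))))"
proof (induction N)
  case 0 then show ?case by simp
next
  case (Suc N)
  have "real (cf_p a (n+Suc N)) / real (cf_q a (n+Suc N)) - real (cf_p a n) / real (cf_q a n)
     = (real (cf_p a (Suc (n+N))) / real (cf_q a (Suc (n+N))) - real (cf_p a (n+N)) / real (cf_q a (n+N)))
       + (real (cf_p a (n+N)) / real (cf_q a (n+N)) - real (cf_p a n) / real (cf_q a n))" by simp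
  also have "\<dots> = (-1)^(n+N) * (1 / (real (cf_q a (n+N)) * real (cf_q a (Suc (n+N)))))
       + (-1)^n * (\<Sum>i<N. (-1)^i * (1 / (real (cf_q a (n+i)) * real (cf_q a (Suc (n+i))))))"
    using conv_step[OF pos, of "n+N"] Suc.IH by simp
  also have "\<dots> = (-1)^n * (\<Sum>i<Suc N. (-1)^i * (1 / (real (cf_q a (n+i)) * real (cf_q a (Suc (n+i))))))"
    by (simp add: algebra_simps power_add)
  finally show ?case .
qed

lemma conv_diff_bound:
  assumes pos: "\<forall>n\<ge>1. a n \<ge> (1::nat)"
  shows "\<bar>real (cf_p a (n+N)) / real (cf_q a (n+N)) - real (cf_p a n) / real (cf_q a n)\<bar>
     \<le> 1 / (real (cf_q a n) * real (cf_q a (Suc n)))"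
proof -
  define f where "f i = 1 / (real (cf_q a (n+i)) * real (cf_q a (Suc (n+i))))" for i
  have fpos: "f i \<ge> 0" for i unfolding f_def by simp
  have fdec: "f (Suc i) \<le> f i" for i
  proof -
    have a1: "real (cf_q a (n+i)) \<le> real (cf_q a (Suc (n+i)))"
      using q_mono_Suc[OF pos, of "n+i"] by (simp only: of_nat_le_iff)
    have a2: "real (cf_q a (Suc (n+i))) \<le> real (cf_q a (Suc (Suc (n+i))))"
      using q_mono_Suc[OF pos, of "Suc (n+i)"] by (simp only: of_nat_le_iff)
    have p1: "real (cf_q a (n+i)) > 0" using q_pos[OF pos, of "n+i"] by simp
    have "real (cf_q a (n+i)) * real (cf_q a (Suc (n+i))) \<le> real (cf_q a (Suc (n+i))) * real (cf_q a (Suc (Suc (n+i))))"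
      using a1 a2 p1 by (intro mult_mono) auto
    moreover have "real (cf_q a (Suc (n+i))) > 0" "real (cf_q a (Suc (Suc (n+i)))) > 0"
      using q_pos[OF pos, of "Suc (n+i)"] q_pos[OF pos, of "Suc (Suc (n+i))"] by (simp_all del: cf_q.simps)
    ultimately show ?thesis unfolding f_def using p1 
      by (auto simp del: cf_q.simps intro!: divide_left_mono mult_pos_pos)
  qed
  have "\<bar>\<Sum>i<N. (-1)^i * f i\<bar> \<le> f 0" using alt_sum_bound[of f N] fpos fdec by auto
  then show ?thesis using conv_tel[OF pos, of n N] unfolding f_def by (simp add: abs_mult)
qed

lemma conv_bound:
  assumes pos: "\<forall>n\<ge>1. a n \<ge> (1::nat)"
    and alpha_cf: "(\<lambda>n. real (cf_p a n) / real (cf_q a n)) \<longlonglongrightarrow> \<alpha>"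
  shows "\<bar>real (cf_q a n) * \<alpha> - real (cf_p a n)\<bar> \<le> 1 / real (cf_q a (Suc n))"
proof -
  have lim: "(\<lambda>N. \<bar>real (cf_p a (N+n)) / real (cf_q a (N+n)) - real (cf_p a n) / real (cf_q a n)\<bar>)
     \<longlonglongrightarrow> \<bar>\<alpha> - real (cf_p a n) / real (cf_q a n)\<bar>"
    by (intro tendsto_intros LIMSEQ_ignore_initial_segment[OF alpha_cf, of n])
  have b: "\<bar>\<alpha> - real (cf_p a n) / real (cf_q a n)\<bar> \<le> 1 / (real (cf_q a n) * real (cf_q a (Suc n)))"
    using conv_diff_bound[OF pos, of n] by (intro LIMSEQ_le_const2[OF lim]) (auto simp: add.commute)
  have p1: "real (cf_q a n) > 0" using q_pos[OF pos, of n] by simp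
  have "\<bar>real (cf_q a n) * \<alpha> - real (cf_p a n)\<bar> = real (cf_q a n) * \<bar>\<alpha> - real (cf_p a n) / real (cf_q a n)\<bar>"
    using p1 by (simp add: field_simps abs_mult[symmetric])
  also have "\<dots> \<le> real (cf_q a n) * (1 / (real (cf_q a n) * real (cf_q a (Suc n))))"
    using b p1 by (intro mult_left_mono) auto
  also have "\<dots> = 1 / real (cf_q a (Suc n))" using p1 by simp
  finally show ?thesis .
qed

lemma periodic:
  assumes r: "r \<ge> 1" and per: "\<forall>i. 1 \<le> i \<and> i \<le> s \<longrightarrow> a (r+i) = a i"
  shows "cf_q a (r+s) = cf_q a r * cf_q a s + cf_q a (r-1) * cf_p a s \<and>
         cf_p a (r+s) = cf_p a r * cf_q a s + cf_p a (r-1) * cf_p a s"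
  using per
proof (induction s rule: less_induct)
  case (less s)
  show ?case
  proof (cases s)
    case 0 then show ?thesis by simp
  next
    case (Suc t)
    show ?thesis
    proof (cases t)
      case 0
      obtain r' where r': "r = Suc r'" using r by (cases r) auto
      have e: "r + s = Suc (Suc r')" using r' Suc 0 by simp
      have "a (r+1) = a 1" using less.prems Suc 0 by auto
      then show ?thesis unfolding e using Suc 0 r' by (simp add: algebra_simps)
    next
      case (Suc u)
      have e: "r + s = Suc (Suc (r+u))" using \<open>s = Suc t\<close> Suc by simp
      have aa: "a (Suc (Suc (r+u))) = a (Suc (Suc u))"
        using less.prems \<open>s = Suc t\<close> Suc by (metis add_Suc_right le_add1 le_refl plus_1_eq_Suc)
      have IH1: "cf_q a (r+u) = cf_q a r * cf_q a u + cf_q a (r-1) * cf_p a u \<and>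
         cf_p a (r+u) = cf_p a r * cf_q a u + cf_p a (r-1) * cf_p a u"
        using less.IH[of u] less.prems \<open>s = Suc t\<close> Suc by auto
      have IH2: "cf_q a (r+Suc u) = cf_q a r * cf_q a (Suc u) + cf_q a (r-1) * cf_p a (Suc u) \<and>
         cf_p a (r+Suc u) = cf_p a r * cf_q a (Suc u) + cf_p a (r-1) * cf_p a (Suc u)"
        using less.IH[of "Suc u"] less.prems \<open>s = Suc t\<close> Suc by auto
      show ?thesis unfolding e using IH1 IH2 aa \<open>s = Suc t\<close> Suc
        by (simp add: algebra_simps)
    qed
  qed
qed

lemma P_bound:
  assumes pos: "\<forall>n\<ge>1. a n \<ge> (1::nat)"
    and alpha_cf: "(\<lambda>n. real (cf_p a n) / real (cf_q a n)) \<longlonglongrightarrow> \<alpha>"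
    and r: "r \<ge> 1" and s: "s \<ge> 1" and per: "\<forall>i. 1 \<le> i \<and> i \<le> s \<longrightarrow> a (r+i) = a i"
  shows "\<bar>real (cf_q a (r-1)) * \<alpha>^2 + (real (cf_q a r) - real (cf_p a (r-1))) * \<alpha> - real (cf_p a r)\<bar>
          \<le> 2 / (real (cf_q a r) * real (cf_q a s) ^ 2)"
proof -
  define Q where "Q j = real (cf_q a j)" for j
  define Pn where "Pn j = real (cf_p a j)" for j
  define d where "d j = Q j * \<alpha> - Pn j" for j
  define P where "P = Q (r-1) * \<alpha>^2 + (Q r - Pn (r-1)) * \<alpha> - Pn r"
  have per': "Q (r+s) = Q r * Q s + Q (r-1) * Pn s" "Pn (r+s) = Pn r * Q s + Pn (r-1) * Pn s"
    using periodic[OF r per] unfolding Q_def Pn_def by (simp_all del: cf_q.simps cf_p.simps)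
  have key: "Q s * P = d (r+s) + d s * d (r-1)"
    unfolding P_def d_def per' by (simp add: algebra_simps power2_eq_square)
  have Qpos: "Q j \<ge> 1" for j unfolding Q_def using q_pos[OF pos, of j] by simp
  have Qmono: "Q i \<le> Q j" if "i \<le> j" for i j unfolding Q_def using q_mono[OF pos that] by simp
  have db: "\<bar>d j\<bar> \<le> 1 / Q (Suc j)" for j unfolding d_def Q_def Pn_def using conv_bound[OF pos alpha_cf] by simp
  have Pnn: "Pn j \<ge> 0" for j unfolding Pn_def by simp
  have "Q r * Q s \<le> Q (r+s)" unfolding per' using Pnn[of s] Qpos[of "r-1"] by simp
  also have "\<dots> \<le> Q (Suc (r+s))" by (rule Qmono) simp
  finally have qq: "Q r * Q s \<le> Q (Suc (r+s))" .
  have b1: "\<bar>d (r+s)\<bar> \<le> 1 / (Q r * Q s)"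
  proof -
    have "0 < Q (Suc (r+s)) * (Q r * Q s)" using Qpos[of r] Qpos[of s] Qpos[of "Suc (r+s)"]
      by (intro mult_pos_pos) auto
    then have "1 / Q (Suc (r+s)) \<le> 1 / (Q r * Q s)" using qq
      by (intro divide_left_mono) auto
    then show ?thesis using db[of "r+s"] by linarith
  qed
  have b2: "\<bar>d s\<bar> \<le> 1 / Q s"
  proof -
    have "1 / Q (Suc s) \<le> 1 / Q s" using Qmono[of s "Suc s"] Qpos[of s]
      by (intro divide_left_mono) auto
    then show ?thesis using db[of s] by linarith
  qed
  have b3: "\<bar>d (r-1)\<bar> \<le> 1 / Q r" using db[of "r-1"] r by simp
  have "\<bar>d s * d (r-1)\<bar> \<le> 1 / Q s * (1 / Q r)" unfolding abs_mult
    using b2 b3 Qpos[of s] by (intro mult_mono) auto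
  then have "\<bar>Q s * P\<bar> \<le> 2 / (Q r * Q s)" unfolding key using b1
    by (simp add: mult.commute)
  then have "Q s * \<bar>P\<bar> \<le> 2 / (Q r * Q s)" using Qpos[of s] by (simp add: abs_mult)
  then have "\<bar>P\<bar> \<le> 2 / (Q r * Q s ^ 2)" using Qpos[of s] Qpos[of r]
    by (simp add: field_simps power2_eq_square)
  then show ?thesis unfolding P_def Q_def Pn_def .
qed

lemma pigeon:
  fixes \<alpha> :: real and c2 T :: nat and c1 c0 :: int
  assumes c2: "c2 \<ge> 1" and T: "T \<ge> 1"
  shows "\<exists>m n::int. 1 \<le> m \<and> m \<le> int (c2*T) \<and> \<bar>of_int m * \<alpha> - of_int n\<bar> < 1 / real T
            \<and> int c2 dvd (c1*n + c0*m)"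
proof -
  define f where "f j = (nat \<lfloor>real T * frac (real j * \<alpha>)\<rfloor>, (c1 * \<lfloor>real j * \<alpha>\<rfloor> + c0 * int j) mod int c2)" for j :: nat
  have img: "f ` {0..c2*T} \<subseteq> {0..<T} \<times> {0..<int c2}"
  proof
    fix y assume "y \<in> f ` {0..c2*T}"
    then obtain j where y: "y = f j" by auto
    have "real T * frac (real j * \<alpha>) < real T" using T frac_lt_1[of "real j * \<alpha>"] by simp
    then have "\<lfloor>real T * frac (real j * \<alpha>)\<rfloor> < int T" by (simp add: floor_less_iff)
    moreover have "0 \<le> \<lfloor>real T * frac (real j * \<alpha>)\<rfloor>" by (simp add: frac_ge_0)
    ultimately have "nat \<lfloor>real T * frac (real j * \<alpha>)\<rfloor> < T" by linarith
    then show "y \<in> {0..<T} \<times> {0..<int c2}" unfolding y f_def using c2 by auto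
  qed
  have "\<not> inj_on f {0..c2*T}"
  proof
    assume "inj_on f {0..c2*T}"
    then have "card {0..c2*T} \<le> card ({0..<T} \<times> {0..<int c2})"
      using img by (intro card_inj_on_le) auto
    then show False by (simp add: mult.commute)
  qed
  then obtain i j where ij: "i \<in> {0..c2*T}" "j \<in> {0..c2*T}" "i \<noteq> j" "f i = f j"
    unfolding inj_on_def by auto
  have main: "\<exists>m n::int. 1 \<le> m \<and> m \<le> int (c2*T) \<and> \<bar>of_int m * \<alpha> - of_int n\<bar> < 1 / real T
            \<and> int c2 dvd (c1*n + c0*m)"
    if "i < j" "i \<le> c2*T" "j \<le> c2*T" "f i = f j" for i j
  proof -
    define m where "m = int j - int i"
    define n where "n = \<lfloor>real j * \<alpha>\<rfloor> - \<lfloor>real i * \<alpha>\<rfloor>"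
    have e1: "\<lfloor>real T * frac (real i * \<alpha>)\<rfloor> = \<lfloor>real T * frac (real j * \<alpha>)\<rfloor>"
    proof -
      have "nat \<lfloor>real T * frac (real i * \<alpha>)\<rfloor> = nat \<lfloor>real T * frac (real j * \<alpha>)\<rfloor>"
        using that(4) unfolding f_def by simp
      moreover have "0 \<le> \<lfloor>real T * frac (real i * \<alpha>)\<rfloor>" "0 \<le> \<lfloor>real T * frac (real j * \<alpha>)\<rfloor>"
        by (simp_all add: frac_ge_0)
      ultimately show ?thesis by linarith
    qed
    have e2: "(c1 * \<lfloor>real i * \<alpha>\<rfloor> + c0 * int i) mod int c2 = (c1 * \<lfloor>real j * \<alpha>\<rfloor> + c0 * int j) mod int c2"
      using that(4) unfolding f_def by simp
    have "int c2 dvd (c1 * \<lfloor>real j * \<alpha>\<rfloor> + c0 * int j) - (c1 * \<lfloor>real i * \<alpha>\<rfloor> + c0 * int i)"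
      using e2[symmetric] by (simp add: mod_eq_dvd_iff)
    then have dv: "int c2 dvd (c1*n + c0*m)" unfolding m_def n_def by (simp add: algebra_simps)
    have diff: "of_int m * \<alpha> - of_int n = frac (real j * \<alpha>) - frac (real i * \<alpha>)"
      unfolding m_def n_def frac_def by (simp add: algebra_simps)
    define b where "b = \<lfloor>real T * frac (real j * \<alpha>)\<rfloor>"
    have Tp: "real T > 0" using T by simp
    have bi: "of_int b \<le> real T * frac (real i * \<alpha>)" "real T * frac (real i * \<alpha>) < of_int b + 1"
      using e1 unfolding b_def by (metis of_int_floor_le, metis real_of_int_floor_add_one_gt)
    have bj: "of_int b \<le> real T * frac (real j * \<alpha>)" "real T * frac (real j * \<alpha>) < of_int b + 1"
      unfolding b_def by (simp, simp)
    have "real T * \<bar>frac (real j * \<alpha>) - frac (real i * \<alpha>)\<bar> < 1"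
    proof -
      have "\<bar>real T * frac (real j * \<alpha>) - real T * frac (real i * \<alpha>)\<bar> < 1" using bi bj by linarith
      then show ?thesis using Tp by (simp add: right_diff_distrib[symmetric] abs_mult)
    qed
    then have "\<bar>frac (real j * \<alpha>) - frac (real i * \<alpha>)\<bar> < 1 / real T"
      using Tp by (simp add: field_simps)
    moreover have "1 \<le> m" "m \<le> int (c2*T)" using that unfolding m_def by (auto simp flip: of_nat_mult)
    ultimately have "1 \<le> m \<and> m \<le> int (c2*T) \<and> \<bar>of_int m * \<alpha> - of_int n\<bar> < 1 / real T
            \<and> int c2 dvd (c1*n + c0*m)" using dv diff by simp
    then show ?thesis by blast
  qed
  show ?thesis
  proof (cases "i < j")
    case True then show ?thesis using main[of i j] ij by auto
  next
    case False then show ?thesis using main[of j i] ij by auto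
  qed
qed



lemma core:
  fixes \<alpha> \<beta> t Kc :: real and A B C D c1 c0 :: int and c2 :: nat
  assumes beta: "\<beta> * (of_int C * \<alpha> + of_int D) = of_int A * \<alpha> + of_int B"
    and c2: "c2 \<ge> 1"
    and c1: "\<bar>real_of_int c1\<bar> \<le> Kc * real c2"
    and Pb: "real c2 ^ 2 * \<bar>real c2 * \<alpha>^2 + of_int c1 * \<alpha> + of_int c0\<bar> \<le> t^2"
    and t: "0 < t" "t \<le> 1" and tC: "\<bar>of_int C\<bar> * t < \<bar>of_int C * \<alpha> + of_int D\<bar>"
  shows "\<exists>q p p' :: int. q \<noteq> 0 \<and>
     \<bar>of_int q\<bar> * \<bar>of_int q * \<alpha> - of_int p\<bar> * \<bar>of_int q * \<beta> - of_int p'\<bar>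
     \<le> (\<bar>of_int C\<bar> * (\<bar>\<alpha>\<bar> + 1) + \<bar>of_int D\<bar>) * \<bar>of_int A - of_int C * \<beta>\<bar>
        * (2 * \<bar>of_int C\<bar> + (\<bar>of_int C\<bar> * (Kc + \<bar>\<alpha>\<bar>) + \<bar>of_int D\<bar>)) * t"
proof -
  define P where "P = real c2 * \<alpha>^2 + of_int c1 * \<alpha> + of_int c0"
  define K1 where "K1 = \<bar>of_int C\<bar> * (\<bar>\<alpha>\<bar> + 1) + \<bar>of_int D\<bar>"
  define K2 where "K2 = \<bar>of_int C\<bar> * (Kc + \<bar>\<alpha>\<bar>) + \<bar>of_int D\<bar>"
  define K3 where "K3 = \<bar>of_int A - of_int C * \<beta>\<bar>"
  have "0 \<le> Kc * real c2" using c1 abs_ge_zero[of "real_of_int c1"] by linarith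
  then have Kc: "Kc \<ge> 0" using c2 by (simp add: zero_le_mult_iff)
  have K1: "K1 \<ge> 0" and K2: "K2 \<ge> 0" and K3: "K3 \<ge> 0" unfolding K1_def K2_def K3_def using Kc by auto
  define T where "T = nat \<lceil>real c2 / t\<rceil>"
  have c2r: "real c2 \<ge> 1" using c2 by simp
  have ct1: "real c2 / t \<ge> 1" using c2r t by (simp add: field_simps)
  have TT: "real T \<ge> real c2 / t" unfolding T_def by linarith
  have T1: "T \<ge> 1" using TT ct1 by linarith
  have Tr: "real T > 0" using T1 by simp
  have TU: "real T \<le> 2 * real c2 / t"
  proof -
    have "real c2 / t \<le> of_int \<lceil>real c2 / t\<rceil>" by (rule le_of_int_ceiling)
    then have "0 \<le> \<lceil>real c2 / t\<rceil>" using ct1 by linarith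
    then have "real T = of_int \<lceil>real c2 / t\<rceil>" unfolding T_def by (simp only: of_nat_nat)
    also have "\<dots> \<le> real c2 / t + 1" by (rule of_int_ceiling_le_add_one)
    also have "\<dots> \<le> 2 * (real c2 / t)" using ct1 by linarith
    also have "\<dots> = 2 * real c2 / t" by simp
    finally show ?thesis .
  qed
  have cT: "real c2 / real T \<le> t" using TT t Tr c2r by (simp add: field_simps)
  obtain m n :: int where mn: "1 \<le> m" "m \<le> int (c2*T)" "\<bar>of_int m * \<alpha> - of_int n\<bar> < 1 / real T"
      "int c2 dvd (c1*n + c0*m)"
    using pigeon[OF c2 T1, where \<alpha>=\<alpha> and ?c1.0=c1 and ?c0.0=c0] by (elim exE conjE) (rule that)
  obtain k where k: "c1*n + c0*m = int c2 * k" using mn(4) by (auto elim: dvdE)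
  define e where "e = of_int m * \<alpha> - of_int n"
  have e: "\<bar>e\<bar> < 1 / real T" using mn(3) unfolding e_def .
  have e2: "\<bar>e\<bar> \<le> t / real c2"
  proof -
    have "\<bar>e\<bar> * real c2 \<le> (1 / real T) * real c2" using e by (intro mult_right_mono) auto
    also have "\<dots> \<le> t" using cT by simp
    finally show ?thesis using c2r by (simp add: field_simps)
  qed
  have "t / real c2 \<le> t" using c2r t by (simp add: divide_le_eq)
  then have et: "\<bar>e\<bar> \<le> t" using e2 by linarith
  have "real_of_int m \<le> real_of_int (int (c2*T))" using mn(2) by (simp only: of_int_le_iff)
  then have mr: "real_of_int m \<ge> 1" "real_of_int m \<le> real c2 * real T" using mn(1) by simp_all
  define q where "q = C*n + D*m"
  define p where "p = C*(-k) + D*n"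
  define p' where "p' = A*n + B*m"
  have nsub: "real_of_int n = of_int m * \<alpha> - e" unfolding e_def by simp
  have kr: "real c2 * of_int k = of_int c1 * of_int n + of_int c0 * of_int m"
    using arg_cong[OF k, of real_of_int] by simp
  have a_: "real c2 * (of_int m * \<alpha>^2 + of_int k) = of_int m * P - of_int c1 * e"
    unfolding P_def using kr nsub by (simp add: algebra_simps power2_eq_square)
  define w where "w = of_int m * \<alpha>^2 + of_int k"
  have wb: "\<bar>w\<bar> \<le> of_int m * \<bar>P\<bar> / real c2 + Kc * \<bar>e\<bar>"
  proof -
    have "real c2 * \<bar>w\<bar> = \<bar>real c2 * w\<bar>" by (simp add: abs_mult)
    also have "\<dots> = \<bar>of_int m * P - of_int c1 * e\<bar>" using a_ unfolding w_def by simp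
    also have "\<dots> \<le> \<bar>of_int m * P\<bar> + \<bar>of_int c1 * e\<bar>" by (rule abs_triangle_ineq4)
    also have "\<dots> = of_int m * \<bar>P\<bar> + \<bar>of_int c1\<bar> * \<bar>e\<bar>" using mr by (simp add: abs_mult)
    finally have "real c2 * \<bar>w\<bar> \<le> of_int m * \<bar>P\<bar> + \<bar>of_int c1\<bar> * \<bar>e\<bar>" .
    also have "\<dots> \<le> of_int m * \<bar>P\<bar> + Kc * real c2 * \<bar>e\<bar>" using c1 by (intro add_left_mono mult_right_mono) auto
    finally show ?thesis using c2r by (simp add: field_simps)
  qed
  have qa: "of_int q * \<alpha> - of_int p = of_int C * (w - \<alpha> * e) + of_int D * e"
    unfolding q_def p_def w_def by (simp add: nsub algebra_simps power2_eq_square)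
  have qab: "\<bar>of_int q * \<alpha> - of_int p\<bar> \<le> \<bar>of_int C\<bar> * of_int m * \<bar>P\<bar> / real c2 + K2 * \<bar>e\<bar>"
  proof -
    have "\<bar>of_int q * \<alpha> - of_int p\<bar> \<le> \<bar>of_int C\<bar> * (\<bar>w\<bar> + \<bar>\<alpha>\<bar> * \<bar>e\<bar>) + \<bar>of_int D\<bar> * \<bar>e\<bar>"
    proof -
      have "\<bar>of_int C * (w - \<alpha> * e) + of_int D * e\<bar> \<le> \<bar>of_int C * (w - \<alpha> * e)\<bar> + \<bar>of_int D * e\<bar>"
        by (rule abs_triangle_ineq)
      also have "\<dots> = \<bar>of_int C\<bar> * \<bar>w - \<alpha> * e\<bar> + \<bar>of_int D\<bar> * \<bar>e\<bar>" by (simp add: abs_mult)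
      also have "\<bar>w - \<alpha> * e\<bar> \<le> \<bar>w\<bar> + \<bar>\<alpha>\<bar> * \<bar>e\<bar>"
        using abs_triangle_ineq4[of w "\<alpha> * e"] by (simp add: abs_mult)
      then have "\<bar>of_int C\<bar> * \<bar>w - \<alpha> * e\<bar> \<le> \<bar>of_int C\<bar> * (\<bar>w\<bar> + \<bar>\<alpha>\<bar> * \<bar>e\<bar>)" by (intro mult_left_mono) auto
      finally show ?thesis unfolding qa by linarith
    qed
    also have "\<dots> \<le> \<bar>of_int C\<bar> * (of_int m * \<bar>P\<bar> / real c2 + Kc * \<bar>e\<bar> + \<bar>\<alpha>\<bar> * \<bar>e\<bar>) + \<bar>of_int D\<bar> * \<bar>e\<bar>"
      using wb by (intro add_right_mono mult_left_mono) auto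
    finally show ?thesis unfolding K2_def by (simp add: algebra_simps)
  qed
  have qb: "of_int q * \<beta> - of_int p' = e * (of_int A - of_int C * \<beta>)"
  proof -
    have "of_int q * \<beta> = (of_int C * (of_int m * \<alpha> - e) + of_int D * of_int m) * \<beta>"
      unfolding q_def by (simp add: nsub)
    also have "\<dots> = of_int m * (\<beta> * (of_int C * \<alpha> + of_int D)) - of_int C * e * \<beta>" by (simp add: algebra_simps)
    also have "\<dots> = of_int m * (of_int A * \<alpha> + of_int B) - of_int C * e * \<beta>" using beta by simp
    finally show ?thesis unfolding p'_def e_def by (simp add: algebra_simps)
  qed
  have qbb: "\<bar>of_int q * \<beta> - of_int p'\<bar> \<le> K3 * \<bar>e\<bar>" unfolding qb K3_def by (simp add: abs_mult)
  have qq: "of_int q = of_int m * (of_int C * \<alpha> + of_int D) - of_int C * e"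
    unfolding q_def by (simp add: nsub algebra_simps)
  have qbound: "\<bar>real_of_int q\<bar> \<le> K1 * of_int m"
  proof -
    have "\<bar>real_of_int q\<bar> \<le> \<bar>of_int C\<bar> * \<bar>of_int n\<bar> + \<bar>of_int D\<bar> * of_int m"
    proof -
      have "\<bar>real_of_int q\<bar> \<le> \<bar>of_int C * of_int n\<bar> + \<bar>of_int D * of_int m\<bar>"
        unfolding q_def using abs_triangle_ineq[of "of_int C * of_int n" "of_int D * of_int m :: real"] by simp
      then show ?thesis using mr by (simp add: abs_mult)
    qed
    also have "\<bar>real_of_int n\<bar> \<le> of_int m * (\<bar>\<alpha>\<bar> + 1)"
    proof -
      have "\<bar>real_of_int n\<bar> \<le> \<bar>of_int m * \<alpha>\<bar> + \<bar>e\<bar>" unfolding nsub by (rule abs_triangle_ineq4)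
      then have "\<bar>real_of_int n\<bar> \<le> of_int m * \<bar>\<alpha>\<bar> + \<bar>e\<bar>" using mr by (simp add: abs_mult)
      then show ?thesis using et t mr by (simp add: algebra_simps)
    qed
    then have "\<bar>of_int C\<bar> * \<bar>real_of_int n\<bar> \<le> \<bar>of_int C\<bar> * (of_int m * (\<bar>\<alpha>\<bar> + 1))" by (intro mult_left_mono) auto
    then have "\<bar>of_int C\<bar> * \<bar>of_int n\<bar> + \<bar>of_int D\<bar> * of_int m \<le> K1 * of_int m" unfolding K1_def by (simp add: algebra_simps)
    finally show ?thesis .
  qed
  have qnz: "q \<noteq> 0"
  proof
    assume "q = 0"
    then have "of_int m * (of_int C * \<alpha> + of_int D) = of_int C * e" using qq by simp
    then have h: "of_int m * \<bar>of_int C * \<alpha> + of_int D\<bar> = \<bar>of_int C\<bar> * \<bar>e\<bar>" using mr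
      by (metis abs_mult abs_of_nonneg order_trans zero_le_one)
    have "\<bar>of_int C * \<alpha> + of_int D\<bar> \<le> of_int m * \<bar>of_int C * \<alpha> + of_int D\<bar>"
      using mr mult_right_mono[of 1 "real_of_int m" "\<bar>of_int C * \<alpha> + of_int D\<bar>"] by simp
    then have "\<bar>of_int C * \<alpha> + of_int D\<bar> \<le> \<bar>of_int C\<bar> * \<bar>e\<bar>" using h by simp
    also have "\<dots> \<le> \<bar>of_int C\<bar> * t" using et by (intro mult_left_mono) auto
    finally show False using tC by simp
  qed
  have Pc: "real c2 ^ 2 * \<bar>P\<bar> \<le> t^2" using Pb unfolding P_def .
  have prod: "\<bar>of_int q\<bar> * \<bar>of_int q * \<alpha> - of_int p\<bar> * \<bar>of_int q * \<beta> - of_int p'\<bar>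
     \<le> (K1 * of_int m) * (\<bar>of_int C\<bar> * of_int m * \<bar>P\<bar> / real c2 + K2 * \<bar>e\<bar>) * (K3 * \<bar>e\<bar>)"
    using qbound qab qbb mr(1) by (intro mult_mono) (auto intro!: mult_nonneg_nonneg add_nonneg_nonneg divide_nonneg_nonneg simp: K1 K2 K3)
  have in1: "of_int m * of_int m * \<bar>P\<bar> * \<bar>e\<bar> / real c2 \<le> 2 * t"
  proof -
    have "of_int m * of_int m * \<bar>P\<bar> * \<bar>e\<bar> / real c2 \<le> (real c2 * real T) * (real c2 * real T) * \<bar>P\<bar> * (1 / real T) / real c2"
      using mr e c2r by (intro divide_right_mono mult_mono) auto
    also have "\<dots> = real c2 ^ 2 * \<bar>P\<bar> * real T / real c2" using Tr c2r by (simp add: field_simps power2_eq_square)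
    also have "\<dots> \<le> t^2 * (2 * real c2 / t) / real c2" using Pc TU Tr c2r by (intro divide_right_mono mult_mono) auto
    also have "\<dots> = 2 * t" using t c2r by (simp add: field_simps power2_eq_square)
    finally show ?thesis .
  qed
  have part1: "(K1 * of_int m) * (\<bar>of_int C\<bar> * of_int m * \<bar>P\<bar> / real c2) * (K3 * \<bar>e\<bar>) \<le> K1 * K3 * (2 * \<bar>of_int C\<bar>) * t"
  proof -
    have "(K1 * of_int m) * (\<bar>of_int C\<bar> * of_int m * \<bar>P\<bar> / real c2) * (K3 * \<bar>e\<bar>)
        = K1 * K3 * \<bar>of_int C\<bar> * (of_int m * of_int m * \<bar>P\<bar> * \<bar>e\<bar> / real c2)" by (simp add: algebra_simps)
    also have "\<dots> \<le> K1 * K3 * \<bar>of_int C\<bar> * (2 * t)"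
      using K1 K3 in1 by (intro mult_left_mono) auto
    finally show ?thesis by (simp add: algebra_simps)
  qed
  have in2: "of_int m * \<bar>e\<bar> * \<bar>e\<bar> \<le> t"
  proof -
    have "of_int m * \<bar>e\<bar> * \<bar>e\<bar> \<le> (real c2 * real T) * (1 / real T) * (1 / real T)"
      using mr e by (intro mult_mono) auto
    also have "\<dots> = real c2 / real T" using Tr by (simp add: field_simps power2_eq_square)
    also have "\<dots> \<le> t" by (rule cT)
    finally show ?thesis .
  qed
  have part2: "(K1 * of_int m) * (K2 * \<bar>e\<bar>) * (K3 * \<bar>e\<bar>) \<le> K1 * K3 * K2 * t"
  proof -
    have "(K1 * of_int m) * (K2 * \<bar>e\<bar>) * (K3 * \<bar>e\<bar>) = K1 * K3 * K2 * (of_int m * \<bar>e\<bar> * \<bar>e\<bar>)" by (simp add: algebra_simps)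
    also have "\<dots> \<le> K1 * K3 * K2 * t" using K1 K2 K3 in2 by (intro mult_left_mono) auto
    finally show ?thesis .
  qed
  have "\<bar>of_int q\<bar> * \<bar>of_int q * \<alpha> - of_int p\<bar> * \<bar>of_int q * \<beta> - of_int p'\<bar> \<le> K1 * K3 * (2 * \<bar>of_int C\<bar> + K2) * t"
    using prod part1 part2 by (simp add: algebra_simps)
  then show ?thesis using qnz unfolding K1_def K2_def K3_def by blast
qed



lemma concat_rep_nth:
  assumes "W \<noteq> []" "i < length (concat (replicate n W) @ take t W)"
  shows "(concat (replicate n W) @ take t W) ! i = W ! (i mod length W)"
  using assms(2)
proof (induction n arbitrary: i)
  case 0 then show ?case by simp
next
  case (Suc n)
  show ?case
  proof (cases "i < length W")
    case True then show ?thesis by (simp add: nth_append)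
  next
    case False
    have "(concat (replicate (Suc n) W) @ take t W) ! i = (concat (replicate n W) @ take t W) ! (i - length W)"
      using False by (simp add: nth_append)
    also have "\<dots> = W ! ((i - length W) mod length W)" using Suc False by (intro Suc.IH) auto
    also have "(i - length W) mod length W = i mod length W" using False by (simp add: le_mod_geq)
    finally show ?thesis .
  qed
qed

lemma word_pow_len:
  fixes x :: rat
  assumes "x > 0"
  shows "of_nat (length (word_pow W x)) \<ge> x * of_nat (length W)"
proof -
  define f where "f = \<lfloor>x\<rfloor>"
  define t where "t = nat \<lceil>(x - of_int f) * of_nat (length W)\<rceil>"
  have f0: "f \<ge> 0" using assms unfolding f_def by simp
  have fr: "0 \<le> x - of_int f" "x - of_int f < 1" unfolding f_def by (simp_all add: floor_less_cancel)
  have "(x - of_int f) * of_nat (length W) \<le> of_nat (length W)"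
    using fr mult_right_mono[of "x - of_int f" 1 "of_nat (length W)"] by simp
  then have "\<lceil>(x - of_int f) * of_nat (length W)\<rceil> \<le> int (length W)"
    by (simp add: ceiling_le_iff)
  then have tle: "t \<le> length W" unfolding t_def by simp
  have tge: "of_nat t \<ge> (x - of_int f) * of_nat (length W)"
    unfolding t_def using fr by (simp add: le_of_int_ceiling)
  have len: "length (word_pow W x) = nat f * length W + t"
    unfolding word_pow_def f_def t_def using tle unfolding t_def f_def
    by (simp add: length_concat sum_list_replicate min_def)
  have "x * of_nat (length W) = of_int f * of_nat (length W) + (x - of_int f) * of_nat (length W)"
    by (simp add: algebra_simps)
  also have "\<dots> \<le> of_int f * of_nat (length W) + of_nat t" using tge by simp
  also have "\<dots> = of_nat (length (word_pow W x))" unfolding len using f0 by simp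
  finally show ?thesis .
qed

lemma word_periodic:
  fixes x :: rat
  assumes pre: "cf_begins_with a (W @ word_pow W x)" and W: "W \<noteq> []"
  shows "\<forall>i. 1 \<le> i \<and> i \<le> length (word_pow W x) \<longrightarrow> a (length W + i) = a i"
proof -
  define f where "f = nat \<lfloor>x\<rfloor>"
  define t where "t = nat \<lceil>(x - of_int \<lfloor>x\<rfloor>) * of_nat (length W)\<rceil>"
  have eq: "W @ word_pow W x = concat (replicate (Suc f) W) @ take t W"
    unfolding word_pow_def f_def t_def by simp
  have nth: "a (Suc i) = W ! (i mod length W)" if "i < length W + length (word_pow W x)" for i
  proof -
    have "a (Suc i) = (W @ word_pow W x) ! i" using pre that unfolding cf_begins_with_def by simp
    also have "\<dots> = W ! (i mod length W)" unfolding eq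
      by (rule concat_rep_nth[OF W]) (use that eq in \<open>metis length_append\<close>)
    finally show ?thesis .
  qed
  show ?thesis
  proof (intro allI impI)
    fix i assume i: "1 \<le> i \<and> i \<le> length (word_pow W x)"
    then obtain j where j: "i = Suc j" by (cases i) auto
    have "a (length W + i) = a (Suc (length W + j))" using j by simp
    also have "\<dots> = W ! ((length W + j) mod length W)" using i j by (intro nth) auto
    also have "(length W + j) mod length W = j mod length W" by simp
    also have "W ! (j mod length W) = a (Suc j)" using i j by (intro nth[symmetric]) auto
    finally show "a (length W + i) = a i" using j by simp
  qed
qed



lemma growth_case1:
  fixes Q :: "nat \<Rightarrow> real" and r L :: "nat \<Rightarrow> nat" and xr t :: real
  assumes Qmono: "\<forall>i j. i \<le> j \<longrightarrow> Q i \<le> Q j"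
    and Qexp: "\<forall>l. Q l \<ge> 2 ^ (l div 2)"
    and rk: "\<forall>k\<ge>1. r k \<ge> k - 1" and Lk: "\<forall>k\<ge>1. real (L k) \<ge> xr * real (r k)"
    and x1: "xr \<ge> 1" and t: "t > 0"
  shows "\<exists>k\<ge>1. r k \<ge> 1 \<and> L k \<ge> 1 \<and> 2 * Q (r k) / Q (L k)^2 \<le> t^2"
proof -
  obtain N where N: "2 / t^2 < 2 ^ N" using real_arch_pow[of 2 "2 / t^2"] by auto
  define k where "k = 2*N + 3"
  have k1: "k \<ge> 1" unfolding k_def by simp
  have rk': "r k \<ge> 2*N+2" using rk[rule_format, OF k1] unfolding k_def by simp
  have "1 * real (r k) \<le> xr * real (r k)" using x1 by (intro mult_right_mono) auto
  then have "real (L k) \<ge> real (r k)" using Lk k1 by auto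
  then have Lr: "L k \<ge> r k" by simp
  have r1: "r k \<ge> 1" using rk' by simp
  have "N \<le> r k div 2" using rk' by simp
  then have "(2::real) ^ N \<le> 2 ^ (r k div 2)" by (intro power_increasing) auto
  also have "\<dots> \<le> Q (r k)" using Qexp by auto
  finally have QN: "2 ^ N \<le> Q (r k)" .
  have "(0::real) < 2 ^ N" by simp
  then have Qp: "Q (r k) > 0" using QN by linarith
  have QL: "Q (L k) \<ge> Q (r k)" using Qmono Lr by auto
  have "2 * Q (r k) / Q (L k)^2 \<le> 2 * Q (r k) / Q (r k)^2"
    using QL Qp by (intro divide_left_mono power_mono mult_pos_pos) auto
  also have "\<dots> = 2 / Q (r k)" using Qp by (simp add: power2_eq_square)
  also have "\<dots> \<le> 2 / 2 ^ N" using QN Qp by (intro divide_left_mono mult_pos_pos) auto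
  also have "\<dots> < t^2" using N t by (simp add: field_simps)
  finally show ?thesis using k1 r1 Lr by auto
qed

lemma growth_case2:
  fixes Q :: "nat \<Rightarrow> real" and r L :: "nat \<Rightarrow> nat" and xr t K0 :: real
  assumes Q1: "\<forall>l. Q l \<ge> 1"
    and Qexp: "\<forall>l. Q l \<ge> 2 ^ (l div 2)" and Qup: "\<forall>l. Q l \<le> K0 ^ l"
    and rk: "\<forall>k\<ge>1. r k \<ge> k - 1" and Lk: "\<forall>k\<ge>1. real (L k) \<ge> xr * real (r k)"
    and xr: "xr > 0" and t: "t > 0"
    and cond: "xr > 1/2 * (ln (real_of_ereal (limsup (\<lambda>l. ereal (Q l powr (1 / real l)))))
                  / ln (real_of_ereal (liminf (\<lambda>l. ereal (Q l powr (1 / real l))))))"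
  shows "\<exists>k\<ge>1. r k \<ge> 1 \<and> L k \<ge> 1 \<and> 2 * Q (r k) / Q (L k)^2 \<le> t^2"
proof -
  define G where "G l = ereal (Q l powr (1 / real l))" for l
  have Qp: "Q l > 0" for l using Q1 by (metis less_le_trans zero_less_one)
  have K0: "K0 \<ge> 1" using Q1 Qup by (metis order_trans power_one_right)
  have lo: "Q l powr (1 / real l) \<ge> 2 powr (1/3)" if l: "l \<ge> 2" for l
  proof -
    have "(2::real) powr (1/3) \<le> 2 powr (real (l div 2) / real l)"
    proof (intro powr_mono)
      have "3 * (l div 2) \<ge> l" using l by presburger
      then have "real l \<le> 3 * real (l div 2)" by linarith
      then show "1/3 \<le> real (l div 2) / real l" using l by (simp add: field_simps)
    qed auto
    also have "\<dots> = (2 powr real (l div 2)) powr (1 / real l)" by (simp add: powr_powr)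
    also have "\<dots> = (2 ^ (l div 2)) powr (1 / real l)" by (simp add: powr_realpow)
    also have "\<dots> \<le> Q l powr (1 / real l)" using Qexp by (intro powr_mono2) auto
    finally show ?thesis .
  qed
  have hi: "Q l powr (1 / real l) \<le> K0" if l: "l \<ge> 1" for l
  proof -
    have "Q l powr (1 / real l) \<le> (K0 ^ l) powr (1 / real l)" using Qup Qp[of l] by (intro powr_mono2) (auto simp: less_imp_le)
    also have "\<dots> = (K0 powr real l) powr (1 / real l)" using K0 by (simp add: powr_realpow)
    also have "\<dots> = K0" using l K0 by (simp add: powr_powr)
    finally show ?thesis .
  qed
  define Ms where "Ms = limsup G"
  define ms where "ms = liminf G"
  have ms_lo: "ereal (2 powr (1/3)) \<le> ms" unfolding ms_def
    by (rule Liminf_bounded) (use lo in \<open>auto simp: G_def eventually_sequentially intro!: exI[of _ 2]\<close>)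
  have Ms_hi: "Ms \<le> ereal K0" unfolding Ms_def
    by (rule Limsup_bounded) (use hi in \<open>auto simp: G_def eventually_sequentially intro!: exI[of _ 1]\<close>)
  have msMs: "ms \<le> Ms" unfolding ms_def Ms_def by (rule Liminf_le_Limsup) simp
  define M where "M = real_of_ereal Ms"
  define m where "m = real_of_ereal ms"
  have msf: "ms = ereal m" unfolding m_def using ms_lo msMs Ms_hi by (cases ms) auto
  have Msf: "Ms = ereal M" unfolding M_def using ms_lo msMs Ms_hi by (cases Ms) auto
  have two13: "(2::real) powr (1/3) > 1" by simp
  have "2 powr (1/3) \<le> m" using ms_lo msf by simp
  then have m1: "m > 1" using two13 by linarith
  have mM: "m \<le> M" using msMs msf Msf by simp
  define lm where "lm = ln m"
  define lM where "lM = ln M"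
  have lm: "lm > 0" unfolding lm_def using m1 by simp
  have lMm: "lM \<ge> lm" unfolding lm_def lM_def using m1 mM by simp
  have cond': "xr > 1/2 * (lM / lm)" using cond unfolding lM_def lm_def M_def m_def Ms_def ms_def G_def .
  define g0 where "g0 = 2 * xr * lm - lM"
  have g0: "g0 > 0" using cond' lm unfolding g0_def by (simp add: field_simps)
  define \<eta> where "\<eta> = g0 / (2 + 4 * xr)"
  have \<eta>0: "\<eta> > 0" unfolding \<eta>_def using g0 xr by simp
  define su where "su = lM + \<eta>"
  define sv where "sv = lm - \<eta>"
  have "\<eta> \<le> 2 * xr * lm / (2 + 4 * xr)" unfolding \<eta>_def g0_def using lMm lm xr
    by (intro divide_right_mono) auto
  also have "\<dots> < lm" using lm xr by (simp add: field_simps) (simp add: pos_add_strict)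
  finally have sv0: "sv > 0" unfolding sv_def by simp
  have "\<eta> * (1 + 2 * xr) = g0 / 2" unfolding \<eta>_def using xr by (simp add: field_simps)
  then have key: "su - 2 * xr * sv = - g0 / 2"
    unfolding su_def sv_def g0_def by (simp add: algebra_simps)
  have "M = exp lM" unfolding lM_def using m1 mM by simp
  moreover have "exp lM < exp su" unfolding su_def using \<eta>0 by simp
  ultimately have "Ms < ereal (exp su)" unfolding Msf by simp
  then have ev1: "eventually (\<lambda>l. G l < ereal (exp su)) sequentially" unfolding Ms_def by (rule Limsup_lessD)
  have "m = exp lm" unfolding lm_def using m1 by simp
  moreover have "exp sv < exp lm" unfolding sv_def using \<eta>0 by simp
  ultimately have "ereal (exp sv) < ms" unfolding msf by simp
  then have ev2: "eventually (\<lambda>l. G l > ereal (exp sv)) sequentially" unfolding ms_def by (rule less_LiminfD)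
  obtain N0 where N0: "\<forall>l\<ge>N0. G l < ereal (exp su) \<and> G l > ereal (exp sv)"
    using eventually_conj[OF ev1 ev2] unfolding eventually_sequentially by auto
  have lnb: "ln (Q l) < real l * su \<and> ln (Q l) > real l * sv" if l: "l \<ge> N0" "l \<ge> 1" for l
  proof -
    have pe: "Q l powr (1 / real l) = exp (ln (Q l) / real l)" using Qp[of l] by (simp add: powr_def)
    have "Q l powr (1 / real l) < exp su \<and> Q l powr (1 / real l) > exp sv"
      using N0 l(1) unfolding G_def by auto
    then have "exp (ln (Q l) / real l) < exp su" "exp (ln (Q l) / real l) > exp sv" unfolding pe by auto
    then have "ln (Q l) / real l < su" "ln (Q l) / real l > sv" by auto
    then show ?thesis using l(2) by (simp add: field_simps)
  qed
  obtain R :: nat where R: "real R > real N0 + real N0 / xr + \<bar>2 * (ln 2 - 2 * ln t) / g0\<bar> + 1"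
    using reals_Archimedean2 by blast
  have Rpos: "real N0 / xr \<ge> 0" using xr by auto
  define k where "k = R + 1"
  have k1: "k \<ge> 1" unfolding k_def by simp
  have rR: "r k \<ge> R" using rk[rule_format, OF k1] unfolding k_def by simp
  have R1: "R \<ge> 1" "R \<ge> N0" using R Rpos abs_ge_zero[of "2 * (ln 2 - 2 * ln t) / g0"] by linarith+
  have xR: "xr * real R > real N0"
  proof -
    have "real R > real N0 / xr" using R Rpos abs_ge_zero[of "2 * (ln 2 - 2 * ln t) / g0"] by linarith
    then show ?thesis using xr by (simp add: field_simps)
  qed
  define rr where "rr = r k"
  define LL where "LL = L k"
  have Lx: "real LL \<ge> xr * real rr" unfolding LL_def rr_def using Lk k1 by auto
  have "xr * real R \<le> xr * real rr" using rR xr unfolding rr_def by (intro mult_left_mono) auto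
  then have LN: "real LL > real N0" using Lx xR by linarith
  then have LN': "LL \<ge> N0" "LL \<ge> 1" by linarith+
  have rN: "rr \<ge> N0" "rr \<ge> 1" using rR R1 unfolding rr_def by auto
  have b1: "ln (Q rr) < real rr * su" using lnb[OF rN] by simp
  have b2: "ln (Q LL) > real LL * sv" using lnb[OF LN'] by simp
  have "real LL * sv \<ge> xr * real rr * sv" using Lx sv0 by (intro mult_right_mono) auto
  then have b2': "ln (Q LL) > xr * real rr * sv" using b2 by linarith
  have "ln (2 * Q rr / Q LL ^ 2) = ln 2 + ln (Q rr) - 2 * ln (Q LL)"
    using Qp[of rr] Qp[of LL] by (simp add: ln_div ln_mult ln_realpow)
  also have "\<dots> < ln 2 + real rr * su - 2 * (xr * real rr * sv)" using b1 b2' by linarith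
  also have "\<dots> = ln 2 + real rr * (su - 2 * xr * sv)" by (simp add: algebra_simps)
  also have "\<dots> = ln 2 - real rr * g0 / 2" unfolding key by simp
  also have "\<dots> \<le> ln 2 - real R * g0 / 2" using rR g0 unfolding rr_def by (simp add: mult_right_mono)
  also have "\<dots> \<le> 2 * ln t"
  proof -
    have "real R > \<bar>2 * (ln 2 - 2 * ln t) / g0\<bar>" using R Rpos by linarith
    then have "real R \<ge> 2 * (ln 2 - 2 * ln t) / g0" by linarith
    then have "real R * g0 \<ge> 2 * (ln 2 - 2 * ln t)" using g0 by (simp add: field_simps)
    then show ?thesis by (simp add: field_simps)
  qed
  also have "\<dots> = ln (t^2)" using t by (simp add: ln_realpow)
  finally have "ln (2 * Q rr / Q LL ^ 2) < ln (t^2)" .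
  then have "2 * Q rr / Q LL ^ 2 < t^2" using Qp[of rr] Qp[of LL] t by simp
  then show ?thesis using k1 rN LN' unfolding rr_def LL_def by auto
qed



lemma nd_le: "nint_dist y \<le> \<bar>y - of_int k\<bar>"
  unfolding nint_dist_def by (rule round_diff_minimal)

lemma nd_nonneg: "nint_dist y \<ge> 0"
  unfolding nint_dist_def by simp

lemma nd_abs: "nint_dist (real (nat \<bar>q\<bar>) * y) \<le> \<bar>of_int q * y - of_int p\<bar>"
proof (cases "q \<ge> 0")
  case True
  then have "real (nat \<bar>q\<bar>) = of_int q" by simp
  then show ?thesis using nd_le[of "of_int q * y" p] by simp
next
  case False
  then have "real (nat \<bar>q\<bar>) = - of_int q" by simp
  then have "nint_dist (real (nat \<bar>q\<bar>) * y) \<le> \<bar>- of_int q * y - of_int (-p)\<bar>" using nd_le[of "- of_int q * y" "-p"] by simp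
  also have "\<dots> = \<bar>of_int q * y - of_int p\<bar>" by (simp add: abs_minus_commute)
  finally show ?thesis .
qed

lemma len_grow:
  assumes lengths: "\<forall>k\<ge>1. length (U (Suc k)) > length (U k)"
  shows "\<forall>k\<ge>1. length (U k) \<ge> k - 1"
proof (intro allI impI)
  fix k :: nat assume "k \<ge> 1"
  then show "length (U k) \<ge> k - 1"
  proof (induction k rule: dec_induct)
    case base then show ?case by simp
  next
    case (step n)
    have "length (U (Suc n)) > length (U n)" using lengths step.hyps(1) by auto
    then show ?case using step.IH step.hyps(1) by arith
  qed
qed

theorem theorem4:
  fixes a :: "nat \<Rightarrow> nat" and \<alpha> :: real and x :: rat and U :: "nat \<Rightarrow> nat list"
  assumes pos: "\<forall>n\<ge>1. a n \<ge> 1"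
    and alpha_cf: "(\<lambda>n. real (cf_p a n) / real (cf_q a n)) \<longlonglongrightarrow> \<alpha>"
    and bad: "\<alpha> \<in> Bad"
    and xpos: "x > 0"
    and prefix: "\<forall>k\<ge>1. cf_begins_with a (U k @ word_pow (U k) x)"
    and lengths: "\<forall>k\<ge>1. length (U (Suc k)) > length (U k)"
    and cond: "let M = real_of_ereal (limsup (\<lambda>l. ereal (real (cf_q a l) powr (1 / real l))));
                   m = real_of_ereal (liminf (\<lambda>l. ereal (real (cf_q a l) powr (1 / real l))))
               in x \<ge> 1 \<or> real_of_rat x > 1/2 * (ln M / ln m)"
  shows "\<forall>\<beta>. (\<exists>A B C D :: int. A * D - B * C \<noteq> 0 \<and>
                 \<beta> = (of_int A * \<alpha> + of_int B) / (of_int C * \<alpha> + of_int D)) \<longrightarrow>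
             (INF q\<in>{1::nat..}. real q * nint_dist (real q * \<alpha>) * nint_dist (real q * \<beta>)) = 0"
proof (intro allI impI)
  fix \<beta> :: real
  assume "\<exists>A B C D :: int. A * D - B * C \<noteq> 0 \<and> \<beta> = (of_int A * \<alpha> + of_int B) / (of_int C * \<alpha> + of_int D)"
  then obtain A B C D :: int where det: "A * D - B * C \<noteq> 0"
    and beq: "\<beta> = (of_int A * \<alpha> + of_int B) / (of_int C * \<alpha> + of_int D)" by blast
  define Q where "Q l = real (cf_q a l)" for l
  define cB where "cB = (INF q\<in>{1::nat..}. real q * nint_dist (real q * \<alpha>))"
  have cB: "cB > 0" using bad unfolding Bad_def cB_def by simp
  have cBle: "cB \<le> real q * nint_dist (real q * \<alpha>)" if "q \<ge> 1" for q :: nat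
    unfolding cB_def by (rule cINF_lower) (use that nd_nonneg in \<open>auto intro!: bdd_belowI[of _ 0]\<close>)
  have Qpos: "Q l \<ge> 1" for l unfolding Q_def using q_pos[OF pos, of l] by simp
  have qstep: "Q (Suc j) * cB \<le> Q j" for j
  proof -
    have "cB \<le> Q j * nint_dist (Q j * \<alpha>)" unfolding Q_def using cBle[of "cf_q a j"] q_pos[OF pos, of j] by simp
    also have "\<dots> \<le> Q j * \<bar>Q j * \<alpha> - of_int (int (cf_p a j))\<bar>" using Qpos[of j] nd_le[of "Q j * \<alpha>" "int (cf_p a j)"] by (intro mult_left_mono) auto
    also have "\<dots> \<le> Q j * (1 / Q (Suc j))" using conv_bound[OF pos alpha_cf, of j] Qpos[of j] unfolding Q_def
      by (intro mult_left_mono) auto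
    finally have "cB \<le> Q j / Q (Suc j)" by simp
    then show ?thesis using Qpos[of "Suc j"] by (simp add: field_simps)
  qed
  define K0 where "K0 = 1 / cB"
  have Qup: "Q l \<le> K0 ^ l" for l
  proof (induction l)
    case 0 then show ?case unfolding Q_def by simp
  next
    case (Suc l)
    have "Q (Suc l) \<le> Q l / cB" using qstep[of l] cB by (simp add: field_simps)
    also have "\<dots> \<le> K0 ^ l / cB" using Suc cB by (intro divide_right_mono) auto
    also have "\<dots> = K0 ^ Suc l" unfolding K0_def by (simp add: field_simps)
    finally show ?case .
  qed
  have Qmono: "\<forall>i j. i \<le> j \<longrightarrow> Q i \<le> Q j" unfolding Q_def using q_mono[OF pos] by auto
  have Qexp: "\<forall>l. Q l \<ge> 2 ^ (l div 2)"
  proof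
    fix l
    have "real (2 ^ (l div 2)) \<le> real (cf_q a l)" using q_exp[OF pos, of l] by (simp only: of_nat_le_iff)
    then show "Q l \<ge> 2 ^ (l div 2)" unfolding Q_def by simp
  qed
  define r where "r k = length (U k)" for k
  define L where "L k = length (word_pow (U k) x)" for k
  define xr where "xr = real_of_rat x"
  have xr: "xr > 0" unfolding xr_def using xpos by simp
  have rk: "\<forall>k\<ge>1. r k \<ge> k - 1" unfolding r_def using len_grow[OF lengths] .
  have Lk: "\<forall>k\<ge>1. real (L k) \<ge> xr * real (r k)"
  proof (intro allI impI)
    fix k :: nat
    have "x * of_nat (r k) \<le> of_nat (L k)" unfolding r_def L_def by (rule word_pow_len[OF xpos])
    then have "real_of_rat (x * of_nat (r k)) \<le> real_of_rat (of_nat (L k))" by (simp only: of_rat_less_eq)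
    then show "real (L k) \<ge> xr * real (r k)" unfolding xr_def by (simp add: of_rat_mult)
  qed
  have irr: "of_int C * \<alpha> + of_int D \<noteq> 0"
  proof
    assume h: "of_int C * \<alpha> + of_int D = 0"
    show False
    proof (cases "C = 0")
      case True then show False using h det by simp
    next
      case False
      define qq where "qq = nat \<bar>C\<bar>"
      have qq1: "qq \<ge> 1" unfolding qq_def using False by simp
      have "nint_dist (real qq * \<alpha>) \<le> \<bar>of_int C * \<alpha> - of_int (- D)\<bar>"
        unfolding qq_def by (rule nd_abs)
      also have "\<dots> = 0" using h by simp
      finally have "real qq * nint_dist (real qq * \<alpha>) \<le> 0" using nd_nonneg[of "real qq * \<alpha>"] by simp
      then show False using cBle[OF qq1] cB by linarith
    qed
  qed
  have beta: "\<beta> * (of_int C * \<alpha> + of_int D) = of_int A * \<alpha> + of_int B" unfolding beq using irr by simp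
  define F where "F q = real q * nint_dist (real q * \<alpha>) * nint_dist (real q * \<beta>)" for q :: nat
  have Fnn: "F q \<ge> 0" for q unfolding F_def using nd_nonneg by simp
  define Kbig where "Kbig = (\<bar>of_int C\<bar> * (\<bar>\<alpha>\<bar> + 1) + \<bar>of_int D\<bar>) * \<bar>of_int A - of_int C * \<beta>\<bar>
        * (2 * \<bar>of_int C\<bar> + (\<bar>of_int C\<bar> * (K0 + \<bar>\<alpha>\<bar>) + \<bar>of_int D\<bar>))"
  have K0p: "K0 > 0" unfolding K0_def using cB by simp
  have Kbig: "Kbig \<ge> 0" unfolding Kbig_def using K0p by simp
  have small: "\<exists>q\<ge>1. F q < \<eta>" if \<eta>: "\<eta> > 0" for \<eta>
  proof -
    define t where "t = min (1/2) (min (\<bar>of_int C * \<alpha> + of_int D\<bar> / (\<bar>of_int C\<bar> + 1)) (\<eta> / (2 * (Kbig + 1))))"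
    have t0: "t > 0" unfolding t_def using irr \<eta> Kbig by auto
    have t1: "t \<le> 1" unfolding t_def by simp
    have tC: "\<bar>of_int C\<bar> * t < \<bar>of_int C * \<alpha> + of_int D\<bar>"
    proof -
      have "t \<le> \<bar>of_int C * \<alpha> + of_int D\<bar> / (\<bar>of_int C\<bar> + 1)" unfolding t_def by simp
      then have "(\<bar>of_int C\<bar> + 1) * t \<le> \<bar>of_int C * \<alpha> + of_int D\<bar>" by (simp add: field_simps)
      then show ?thesis using t0 by (simp add: algebra_simps)
    qed
    have Kt: "Kbig * t < \<eta>"
    proof -
      have "t \<le> \<eta> / (2 * (Kbig + 1))" unfolding t_def by simp
      then have "Kbig * t \<le> Kbig * (\<eta> / (2 * (Kbig + 1)))" using Kbig by (intro mult_left_mono) auto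
      also have "\<dots> < \<eta>"
      proof -
        have "0 < Kbig * \<eta> + \<eta> * 2" using Kbig \<eta> by (intro add_nonneg_pos) auto
        then show ?thesis using Kbig \<eta> by (simp add: field_simps)
      qed
      finally show ?thesis .
    qed
    have ex: "\<exists>k\<ge>1. r k \<ge> 1 \<and> L k \<ge> 1 \<and> 2 * Q (r k) / Q (L k)^2 \<le> t^2"
    proof (cases "x \<ge> 1")
      case True
      then have "xr \<ge> 1" unfolding xr_def by (metis of_rat_1 of_rat_less_eq)
      then show ?thesis by (rule growth_case1[OF Qmono Qexp rk Lk _ t0])
    next
      case False
      then have c2: "xr > 1/2 * (ln (real_of_ereal (limsup (\<lambda>l. ereal (Q l powr (1 / real l)))))
                  / ln (real_of_ereal (liminf (\<lambda>l. ereal (Q l powr (1 / real l))))))"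
      proof -
        have "x \<ge> 1 \<or> real_of_rat x > 1/2 * (ln (real_of_ereal (limsup (\<lambda>l. ereal (real (cf_q a l) powr (1 / real l)))))
                  / ln (real_of_ereal (liminf (\<lambda>l. ereal (real (cf_q a l) powr (1 / real l))))))"
          using cond by (simp only: Let_def)
        then show ?thesis using False unfolding xr_def Q_def by blast
      qed
      have Q1: "\<forall>l. Q l \<ge> 1" using Qpos by simp
      have Qup': "\<forall>l. Q l \<le> K0 ^ l" using Qup by blast
      show ?thesis by (rule growth_case2[OF Q1 Qexp Qup' rk Lk xr t0 c2])
    qed
    then obtain k where k: "k \<ge> 1" "r k \<ge> 1" "L k \<ge> 1" "2 * Q (r k) / Q (L k)^2 \<le> t^2" by blast
    define rr where "rr = r k"
    define LL where "LL = L k"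
    have W: "U k \<noteq> []" using k(2) unfolding r_def by auto
    have per: "\<forall>i. 1 \<le> i \<and> i \<le> LL \<longrightarrow> a (rr + i) = a i"
      using word_periodic[OF prefix[rule_format, OF k(1)] W] unfolding rr_def LL_def r_def L_def .
    have rr1: "rr \<ge> 1" and LL1: "LL \<ge> 1" using k unfolding rr_def LL_def by auto
    note Pb0 = P_bound[OF pos alpha_cf rr1 LL1 per]
    define c2 where "c2 = cf_q a (rr - 1)"
    define c1 where "c1 = int (cf_q a rr) - int (cf_p a (rr - 1))"
    define c0 where "c0 = - int (cf_p a rr)"
    have c2p: "c2 \<ge> 1" unfolding c2_def using q_pos[OF pos] .
    have Peq: "real c2 * \<alpha>^2 + of_int c1 * \<alpha> + of_int c0 = real (cf_q a (rr-1)) * \<alpha>^2 + (real (cf_q a rr) - real (cf_p a (rr-1))) * \<alpha> - real (cf_p a rr)"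
      unfolding c2_def c1_def c0_def by simp
    have c1b: "\<bar>real_of_int c1\<bar> \<le> K0 * real c2"
    proof -
      have pq: "cf_p a (rr-1) \<le> cf_q a rr" using p_le_q[OF pos, of "rr-1"] q_mono[OF pos, of "rr-1" rr] by simp
      have "\<bar>real_of_int c1\<bar> \<le> Q rr" unfolding c1_def Q_def using pq by simp
      also have "\<dots> \<le> Q (rr - 1) / cB" using qstep[of "rr-1"] rr1 cB by (simp add: field_simps)
      also have "\<dots> = K0 * real c2" unfolding K0_def c2_def Q_def by simp
      finally show ?thesis .
    qed
    have Pb: "real c2 ^ 2 * \<bar>real c2 * \<alpha>^2 + of_int c1 * \<alpha> + of_int c0\<bar> \<le> t^2"
    proof -
      have c2Q: "real c2 \<le> Q rr" unfolding c2_def Q_def using q_mono[OF pos, of "rr-1" rr] by simp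
      have Qr: "Q rr > 0" "Q LL > 0" using Qpos[of rr] Qpos[of LL] by auto
      have "real c2 ^ 2 * \<bar>real c2 * \<alpha>^2 + of_int c1 * \<alpha> + of_int c0\<bar> \<le> Q rr ^ 2 * (2 / (Q rr * Q LL ^ 2))"
        unfolding Peq using Pb0 c2Q unfolding Q_def by (intro mult_mono power_mono) auto
      also have "\<dots> = 2 * Q rr / Q LL ^ 2" using Qr by (simp add: field_simps power2_eq_square)
      also have "\<dots> \<le> t^2" using k(4) unfolding rr_def LL_def .
      finally show ?thesis .
    qed
    have "\<exists>q p p' :: int. q \<noteq> 0 \<and>
      \<bar>of_int q\<bar> * \<bar>of_int q * \<alpha> - of_int p\<bar> * \<bar>of_int q * \<beta> - of_int p'\<bar> \<le> Kbig * t"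
      using core[OF beta c2p c1b Pb t0 t1 tC] unfolding Kbig_def .
    then obtain q p p' :: int where qpp: "q \<noteq> 0"
      "\<bar>of_int q\<bar> * \<bar>of_int q * \<alpha> - of_int p\<bar> * \<bar>of_int q * \<beta> - of_int p'\<bar> \<le> Kbig * t"
      by blast
    define qn where "qn = nat \<bar>q\<bar>"
    have qn1: "qn \<ge> 1" unfolding qn_def using qpp(1) by simp
    have "F qn \<le> \<bar>of_int q\<bar> * \<bar>of_int q * \<alpha> - of_int p\<bar> * \<bar>of_int q * \<beta> - of_int p'\<bar>"
      unfolding F_def qn_def using nd_abs[of q \<alpha> p] nd_abs[of q \<beta> p'] nd_nonneg
      by (intro mult_mono) auto
    then have "F qn < \<eta>" using qpp(2) Kt by linarith
    then show ?thesis using qn1 by blast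
  qed
  have ge: "(INF q\<in>{1::nat..}. F q) \<ge> 0" by (rule cINF_greatest) (auto simp: Fnn)
  have le: "(INF q\<in>{1::nat..}. F q) \<le> 0"
  proof (rule ccontr)
    assume "\<not> (INF q\<in>{1::nat..}. F q) \<le> 0"
    then have "(INF q\<in>{1::nat..}. F q) > 0" by simp
    from small[OF this] obtain q where q: "q \<ge> 1" "F q < (INF q\<in>{1::nat..}. F q)" by blast
    have "(INF q\<in>{1::nat..}. F q) \<le> F q" by (rule cINF_lower) (use q Fnn in \<open>auto intro!: bdd_belowI[of _ 0]\<close>)
    then show False using q by simp
  qed
  show "(INF q\<in>{1::nat..}. real q * nint_dist (real q * \<alpha>) * nint_dist (real q * \<beta>)) = 0"
    using ge le unfolding F_def by simp
qed

end
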